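(* For integers $n\ge k\ge1$ define integers $A_h^{k,n}$ ($h\in\mathbb{Z}$) by $A_h^{k,n}=0$ if $h>k$ or $h\le0$, $A_k^{k,n}=1$, and for $1\le h\le k-1$ recursively (downwards in $h$) \[A_h^{k,n}=-\sum_{j=h+1}^{k}(-1)^{\lfloor\frac{j-h+1}{2}\rfloor}\binom{n-j+\lfloor\frac{j-h}{2}\rfloor}{\lfloor\frac{j-h}{2}\rfloor}A_j^{k,n},\] and set $A_h^{k,n}=0$ for all $h$ when $k\le 0$. Then for $k\ge2$ and $1\le h\le k-1$: (1) $A_{h+1}^{k,n}=A_h^{k-1,n-1}$; (2) $A_h^{k,k}=A_h^{k-1,k-1}+A_h^{k-2,k-1}$; (3) if $k<n$, $A_h^{k,n}=A_h^{k,n-1}+A_h^{k-2,n-1}$.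
   Context: $\binom{a}{b}$ denotes the ordinary binomial coefficient and $\lfloor x\rfloor$ the integer part. *)

theory Defs
  imports Main
begin

text \<open>The binomial top n-j+floor((j-h)/2) is nonnegative
  whenever n \<ge> k (the paper's range); nat is only a coercion there.\<close>

function Acoef :: "int \<Rightarrow> int \<Rightarrow> int \<Rightarrow> int" where
  "Acoef k n h =
     (if k \<le> 0 \<or> h > k \<or> h \<le> 0 then 0
      else if h = k then 1
      else - (\<Sum>j\<in>{h+1..k}. (-1) ^ nat ((j - h + 1) div 2)
                 * int (nat (n - j + (j - h) div 2) choose nat ((j - h) div 2))
                 * Acoef k n j))"
  by auto
termination
  by (relation "measure (\<lambda>(k, n, h). nat (k - h))") auto

end

theory Submission imports Defs Complex_Main begin
declare Acoef.simps[simp del]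

lemma L1: "(\<Sum>s\<le>r. (-1)^s * of_nat (r choose s) * ((x - of_nat s) gchoose r)) = (1::real)"
proof (induction r arbitrary: x)
  case 0 then show ?case by simp
next
  case (Suc r)
  define g where "g = (\<lambda>y::real. y gchoose (Suc r))"
  have pas: "g y = g (y - 1) + ((y - 1) gchoose r)" for y
    unfolding g_def using gbinomial_Suc_Suc[of "y - 1" r] by simp
  have "(\<Sum>s\<le>Suc r. (-1)^s * of_nat (Suc r choose s) * g (x - of_nat s))
      = g x + (\<Sum>i\<le>r. (-1)^(Suc i) * (of_nat (r choose i) + of_nat (r choose Suc i)) * g (x - of_nat (Suc i)))"
    by (subst sum.atMost_Suc_shift) simp
  also have "\<dots> = (g x + (\<Sum>i\<le>r. (-1)^(Suc i) * of_nat (r choose Suc i) * g (x - of_nat (Suc i))))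
       - (\<Sum>i\<le>r. (-1)^i * of_nat (r choose i) * g (x - 1 - of_nat i))"
    by (simp add: sum_subtractf[symmetric] sum.distrib[symmetric] algebra_simps)
  also have "g x + (\<Sum>i\<le>r. (-1)^(Suc i) * of_nat (r choose Suc i) * g (x - of_nat (Suc i)))
      = (\<Sum>s\<le>Suc r. (-1)^s * of_nat (r choose s) * g (x - of_nat s))"
    unfolding sum.atMost_Suc_shift[of _ r] by simp
  also have "\<dots> = (\<Sum>s\<le>r. (-1)^s * of_nat (r choose s) * g (x - of_nat s))"
    by simp
  finally have "(\<Sum>s\<le>Suc r. (-1)^s * of_nat (Suc r choose s) * g (x - of_nat s))
     = (\<Sum>s\<le>r. (-1)^s * of_nat (r choose s) * (g (x - of_nat s) - g (x - 1 - of_nat s)))"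
    by (simp add: algebra_simps sum_subtractf)
  also have "\<dots> = (\<Sum>s\<le>r. (-1)^s * of_nat (r choose s) * ((x - 1 - of_nat s) gchoose r))"
    by (intro sum.cong refl) (simp add: pas[of "x - of_nat _"] algebra_simps)
  also have "\<dots> = 1" using Suc.IH[of "x - 1"] by simp
  finally show ?case unfolding g_def .
qed

lemma G: "r \<le> N \<Longrightarrow> (\<Sum>s\<le>r. (-1)^s * int (r choose s) * int (N - s choose r)) = 1"
proof -
  assume "r \<le> N"
  have "real_of_int (\<Sum>s\<le>r. (-1)^s * int (r choose s) * int (N - s choose r))
     = (\<Sum>s\<le>r. (-1)^s * of_nat (r choose s) * ((of_nat N - of_nat s) gchoose r))"
    unfolding of_int_sum
  proof (intro sum.cong refl)
    fix s assume "s \<in> {..r}"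
    then have "s \<le> N" using \<open>r \<le> N\<close> by simp
    have "real (N - s choose r) = (of_nat (N - s) gchoose r)" by (rule binomial_gbinomial)
    also have "\<dots> = (of_nat N - of_nat s) gchoose r" using \<open>s \<le> N\<close> by (simp add: of_nat_diff)
    finally show "real_of_int ((-1)^s * int (r choose s) * int (N - s choose r))
       = (-1)^s * of_nat (r choose s) * ((of_nat N - of_nat s) gchoose r)" by simp
  qed
  also have "\<dots> = 1" by (rule L1)
  finally show ?thesis by linarith
qed

lemma F: "2*r \<le> N \<Longrightarrow> (\<Sum>s\<le>r. (-1)^s * int (N-s choose s) * int (N-2*s choose (r-s))) = 1"
proof -
  assume a: "2*r \<le> N"
  have "(\<Sum>s\<le>r. (-1)^s * int (N-s choose s) * int (N-2*s choose (r-s)))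
      = (\<Sum>s\<le>r. (-1)^s * int (r choose s) * int (N - s choose r))"
  proof (intro sum.cong refl)
    fix s assume "s \<in> {..r}"
    then have "s \<le> r" "r \<le> N - s" using a by auto
    from choose_mult[OF this] have "(N - s choose r) * (r choose s) = (N - s choose s) * (N - 2*s choose (r - s))"
      by (simp add: mult_2)
    then show "(-1)^s * int (N-s choose s) * int (N-2*s choose (r-s)) = (-1)^s * int (r choose s) * int (N - s choose r)"
      by (metis (no_types, opaque_lifting) mult.commute mult.left_commute of_nat_mult)
  qed
  also have "\<dots> = 1" using a by (intro G) simp
  finally show ?thesis .
qed

lemma SE: "(\<Sum>e\<le>2*r. f e) = (\<Sum>s\<le>r. f(2*s)) + (\<Sum>s<r. f(2*s+1))" for f :: "nat \<Rightarrow> int"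
  by (induction r) (simp_all add: sum.atMost_Suc algebra_simps)

lemma SO: "(\<Sum>e\<le>2*r+1. f e) = (\<Sum>s\<le>r. f(2*s)) + (\<Sum>s\<le>r. f(2*s+1))" for f :: "nat \<Rightarrow> int"
  using SE[where r=r and f=f] by (simp add: lessThan_Suc_atMost[symmetric])

definition tt :: "nat \<Rightarrow> nat \<Rightarrow> nat \<Rightarrow> int" where
  "tt N d e = (-1)^((e+1) div 2) * int (N - e + e div 2 choose (e div 2)) * int (N - e choose ((d-e) div 2))"

lemma L3: "1 \<le> d \<Longrightarrow> d \<le> N \<Longrightarrow> (\<Sum>e\<le>d. tt N d e) = 0"
proof -
  assume d1: "1 \<le> d" and dN: "d \<le> N"
  have cs: "(\<exists>r. d = 2*r \<and> 1 \<le> r) \<or> (\<exists>r. d = 2*r+1)"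
  proof (cases "even d")
    case True then have "d = 2*(d div 2)" by simp
    then show ?thesis using d1 by (intro disjI1 exI[of _ "d div 2"]) simp
  next
    case False then have "d = 2*(d div 2) + 1" by simp
    then show ?thesis by blast
  qed
  then consider r where "d = 2*r" "1 \<le> r" | r where "d = 2*r+1" by blast
  then show ?thesis
  proof cases
    case 1
    then obtain q where q: "r = Suc q" by (cases r) auto
    have ev: "(\<Sum>s\<le>r. tt N d (2*s)) = 1"
    proof -
      have "(\<Sum>s\<le>r. tt N d (2*s)) = (\<Sum>s\<le>r. (-1)^s * int (N-s choose s) * int (N-2*s choose (r-s)))"
      proof (intro sum.cong refl)
        fix s assume "s \<in> {..r}"
        then have "s \<le> r" by simp
        have "(d - 2*s) div 2 = r - s" using 1 \<open>s \<le> r\<close> by simp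
        moreover have "N - 2*s + 2*s div 2 = N - s" using 1 dN \<open>s \<le> r\<close> by simp
        ultimately show "tt N d (2*s) = (-1)^s * int (N-s choose s) * int (N-2*s choose (r-s))"
          unfolding tt_def by simp
      qed
      also have "\<dots> = 1" using 1 dN by (intro F) simp
      finally show ?thesis .
    qed
    have od: "(\<Sum>s<r. tt N d (2*s+1)) = -1"
    proof -
      have "(\<Sum>s<r. tt N d (2*s+1)) = - (\<Sum>s\<le>q. (-1)^s * int ((N-1)-s choose s) * int ((N-1)-2*s choose (q-s)))"
        unfolding sum_negf[symmetric] q lessThan_Suc_atMost
      proof (intro sum.cong refl)
        fix s assume "s \<in> {..q}"
        then have "s \<le> q" by simp
        have "(2*s+1+1) div 2 = Suc s" by simp
        moreover have "N - (2*s+1) + (2*s+1) div 2 = (N-1) - s" using 1 dN q \<open>s \<le> q\<close> by simp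
        moreover have "(d - (2*s+1)) div 2 = q - s" using 1 q \<open>s \<le> q\<close> by simp
        moreover have "N - (2*s+1) = (N-1) - 2*s" by simp
        ultimately show "tt N d (2*s+1) = - ((-1)^s * int ((N-1)-s choose s) * int ((N-1)-2*s choose (q-s)))"
          unfolding tt_def by simp
      qed
      also have "\<dots> = -1" using 1 dN q by (subst F) simp_all
      finally show ?thesis .
    qed
    show ?thesis using SE[where r=r and f="tt N d"] ev od 1 by simp
  next
    case 2
    have ev: "(\<Sum>s\<le>r. tt N d (2*s)) = 1"
    proof -
      have "(\<Sum>s\<le>r. tt N d (2*s)) = (\<Sum>s\<le>r. (-1)^s * int (N-s choose s) * int (N-2*s choose (r-s)))"
      proof (intro sum.cong refl)
        fix s assume "s \<in> {..r}"
        then have "s \<le> r" by simp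
        have "(d - 2*s) div 2 = r - s" using 2 \<open>s \<le> r\<close> by simp
        moreover have "N - 2*s + 2*s div 2 = N - s" using 2 dN \<open>s \<le> r\<close> by simp
        ultimately show "tt N d (2*s) = (-1)^s * int (N-s choose s) * int (N-2*s choose (r-s))"
          unfolding tt_def by simp
      qed
      also have "\<dots> = 1" using 2 dN by (intro F) simp
      finally show ?thesis .
    qed
    have od: "(\<Sum>s\<le>r. tt N d (2*s+1)) = -1"
    proof -
      have "(\<Sum>s\<le>r. tt N d (2*s+1)) = - (\<Sum>s\<le>r. (-1)^s * int ((N-1)-s choose s) * int ((N-1)-2*s choose (r-s)))"
        unfolding sum_negf[symmetric]
      proof (intro sum.cong refl)
        fix s assume "s \<in> {..r}"
        then have "s \<le> r" by simp
        have "(2*s+1+1) div 2 = Suc s" by simp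
        moreover have "N - (2*s+1) + (2*s+1) div 2 = (N-1) - s" using 2 dN \<open>s \<le> r\<close> by simp
        moreover have "(d - (2*s+1)) div 2 = r - s" using 2 \<open>s \<le> r\<close> by simp
        moreover have "N - (2*s+1) = (N-1) - 2*s" by simp
        ultimately show "tt N d (2*s+1) = - ((-1)^s * int ((N-1)-s choose s) * int ((N-1)-2*s choose (r-s)))"
          unfolding tt_def by simp
      qed
      also have "\<dots> = -1" using 2 dN by (subst F) simp_all
      finally show ?thesis .
    qed
    show ?thesis using SO[where r=r and f="tt N d"] ev od 2 by simp
  qed
qed

lemma L3': "1 \<le> d \<Longrightarrow> d \<le> N \<Longrightarrow> (\<Sum>e\<in>{1..d}. tt N d e) = - int (N choose (d div 2))"
proof -
  assume a: "1 \<le> d" "d \<le> N"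
  have "(\<Sum>e\<le>d. tt N d e) = tt N d 0 + (\<Sum>e\<in>{1..d}. tt N d e)"
    by (simp add: atMost_atLeast0 sum.atLeast_Suc_atMost)
  moreover have "tt N d 0 = int (N choose (d div 2))" by (simp add: tt_def)
  ultimately show ?thesis using L3[OF a] by simp
qed

lemma nd: "nat (int m div 2) = m div 2"
  using zdiv_int[of m 2] by simp
lemma nd2: "0 \<le> x \<Longrightarrow> nat (x div 2) = nat x div 2"
  by (metis nd int_nat_eq)

lemma closed: "0 < h \<Longrightarrow> h \<le> k \<Longrightarrow> k \<le> n \<Longrightarrow> Acoef k n h = int (nat(n-h) choose nat((k-h) div 2))"
proof (induction "nat(k-h)" arbitrary: h rule: less_induct)
  case less
  show ?case
  proof (cases "h = k")
    case True
    then show ?thesis using less.prems by (subst Acoef.simps) simp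
  next
    case False
    then have hk: "h < k" using less.prems by simp
    define N where "N = nat (n - h)"
    define d where "d = nat (k - h)"
    have d1: "1 \<le> d" "d \<le> N" using hk less.prems unfolding N_def d_def by auto
    define c where "c j = (-1) ^ nat ((j - h + 1) div 2)
                 * int (nat (n - j + (j - h) div 2) choose nat ((j - h) div 2))" for j
    have "Acoef k n h = - (\<Sum>j\<in>{h+1..k}. c j * Acoef k n j)"
      using hk less.prems by (subst Acoef.simps) (simp add: c_def)
    also have "\<dots> = - (\<Sum>j\<in>{h+1..k}. c j * int (nat(n-j) choose nat((k-j) div 2)))"
    proof -
      have "(\<Sum>j\<in>{h+1..k}. c j * Acoef k n j) = (\<Sum>j\<in>{h+1..k}. c j * int (nat(n-j) choose nat((k-j) div 2)))"
      proof (intro sum.cong refl)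
        fix j assume "j \<in> {h+1..k}"
        then have "nat (k - j) < nat (k - h)" "0 < j" "j \<le> k" using less.prems by auto
        then show "c j * Acoef k n j = c j * int (nat(n-j) choose nat((k-j) div 2))"
          using less.hyps less.prems by simp
      qed
      then show ?thesis by simp
    qed
    also have "(\<Sum>j\<in>{h+1..k}. c j * int (nat(n-j) choose nat((k-j) div 2))) = (\<Sum>e\<in>{1..d}. tt N d e)"
    proof -
      have img: "{h+1..k} = (\<lambda>e. h + int e) ` {1..d}"
      proof
        show "{h+1..k} \<subseteq> (\<lambda>e. h + int e) ` {1..d}"
        proof
          fix j assume "j \<in> {h+1..k}"
          then have "j = h + int (nat (j - h))" "nat (j-h) \<in> {1..d}" unfolding d_def by auto
          then show "j \<in> (\<lambda>e. h + int e) ` {1..d}" by blast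
        qed
        show "(\<lambda>e. h + int e) ` {1..d} \<subseteq> {h+1..k}" unfolding d_def using hk by auto
      qed
      have inj: "inj_on (\<lambda>e. h + int e) {1..d}" by (auto simp: inj_on_def)
      have "(\<Sum>j\<in>{h+1..k}. c j * int (nat(n-j) choose nat((k-j) div 2)))
         = (\<Sum>e\<in>{1..d}. c (h + int e) * int (nat(n-(h + int e)) choose nat((k-(h + int e)) div 2)))"
        unfolding img by (rule sum.reindex[OF inj, unfolded comp_def])
      also have "\<dots> = (\<Sum>e\<in>{1..d}. tt N d e)"
      proof (intro sum.cong refl)
        fix e assume "e \<in> {1..d}"
        then have e: "e \<le> d" "e \<le> N" using d1 by auto
        have 1: "nat ((h + int e - h + 1) div 2) = (e+1) div 2"
          using nd[of "e+1"] by simp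
        have 2: "nat (int e div 2) = e div 2" by (rule nd)
        have 3: "nat (n - (h + int e) + (h + int e - h) div 2) = N - e + e div 2"
        proof -
          have "n - (h + int e) + (h + int e - h) div 2 = int (N - e + e div 2)"
            using e less.prems unfolding N_def using zdiv_int[of e 2] by simp
          then show ?thesis by simp
        qed
        have 4: "nat (n - (h + int e)) = N - e" using e less.prems unfolding N_def by simp
        have 5: "nat ((k - (h + int e)) div 2) = (d - e) div 2"
        proof -
          have "k - (h + int e) = int (d - e)" using e hk unfolding d_def by simp
          then show ?thesis using nd by simp
        qed
        show "c (h + int e) * int (nat(n-(h + int e)) choose nat((k-(h + int e)) div 2)) = tt N d e"
          unfolding c_def tt_def using 1 2 3 4 5 by simp
      qed
      finally show ?thesis .
    qed
    also have "\<dots> = - int (N choose (d div 2))" by (rule L3'[OF d1])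
    finally show ?thesis unfolding N_def d_def
      using nd2[of "k-h"] hk by simp
  qed
qed

lemma P2: "1 \<le> D \<Longrightarrow> D choose (D div 2) = ((D-1) choose ((D-1) div 2)) + (if 2 \<le> D then ((D-1) choose ((D-2) div 2)) else 0)"
proof (cases "even D")
  case True
  assume "1 \<le> D"
  then obtain r where r: "D = 2*r" "1 \<le> r" using True by (intro that[of "D div 2"]) auto
  then obtain q where q: "r = Suc q" by (cases r) auto
  have "D choose (D div 2) = Suc (2*q+1) choose Suc q" using r q by simp
  also have "\<dots> = (2*q+1 choose q) + (2*q+1 choose Suc q)" by simp
  also have "(2*q+1 choose Suc q) = (2*q+1 choose q)"
    using binomial_symmetric[of q "2*q+1"] by simp
  finally show ?thesis using r q by simp
next
  case False
  assume "1 \<le> D"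
  then obtain r where r: "D = 2*r+1" using False by (metis oddE)
  show ?thesis
  proof (cases r)
    case 0 then show ?thesis using r by simp
  next
    case (Suc q)
    have "D choose (D div 2) = Suc (2*r) choose Suc q" using r Suc by simp
    also have "\<dots> = (2*r choose q) + (2*r choose Suc q)" by simp
    finally show ?thesis using r Suc by simp
  qed
qed

theorem lemma5p7:
  fixes k n h :: int
  assumes "k \<le> n" and "2 \<le> k" and "1 \<le> h" and "h \<le> k - 1"
  shows "Acoef k n (h + 1) = Acoef (k - 1) (n - 1) h
       \<and> Acoef k k h = Acoef (k - 1) (k - 1) h + Acoef (k - 2) (k - 1) h
       \<and> (k < n \<longrightarrow> Acoef k n h = Acoef k (n - 1) h + Acoef (k - 2) (n - 1) h)"
proof (intro conjI impI)
  show "Acoef k n (h + 1) = Acoef (k - 1) (n - 1) h"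
    using assms by (simp add: closed algebra_simps)
  have A0: "Acoef (k - 2) m h = 0" if "h = k - 1" for m
    using that by (subst Acoef.simps) simp
  define D where "D = nat (k - h)"
  have D1: "1 \<le> D" using assms unfolding D_def by simp
  have dd: "nat ((k - h) div 2) = D div 2" "nat ((k - 1 - h) div 2) = (D - 1) div 2"
    using assms nd2[of "k-h"] nd2[of "k-1-h"] unfolding D_def
    by (auto simp: nat_diff_distrib)
  have dd3: "nat ((k - 2 - h) div 2) = (D - 2) div 2" if "h \<noteq> k - 1"
    using assms that nd2[of "k-2-h"] unfolding D_def
    by (auto simp: nat_diff_distrib)
  show "Acoef k k h = Acoef (k - 1) (k - 1) h + Acoef (k - 2) (k - 1) h"
  proof (cases "h = k - 1")
    case True
    then show ?thesis using assms A0 by (simp add: closed)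
  next
    case False
    then have "2 \<le> D" using assms unfolding D_def by simp
    have e: "nat (k - h) = D" "nat (k - 1 - h) = D - 1" using assms unfolding D_def by auto
    have "Acoef k k h = int (D choose (D div 2))" using assms dd e by (simp add: closed)
    moreover have "Acoef (k - 1) (k - 1) h = int ((D-1) choose ((D-1) div 2))" using assms dd e by (simp add: closed)
    moreover have "Acoef (k - 2) (k - 1) h = int ((D-1) choose ((D-2) div 2))" using assms dd3 e False by (simp add: closed)
    ultimately show ?thesis using P2[OF D1] \<open>2 \<le> D\<close> by simp
  qed
  assume kn: "k < n"
  define M where "M = nat (n - 1 - h)"
  have e: "nat (n - h) = Suc M" using assms kn unfolding M_def by simp
  show "Acoef k n h = Acoef k (n - 1) h + Acoef (k - 2) (n - 1) h"
  proof (cases "h = k - 1")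
    case True
    then show ?thesis using assms kn A0 by (simp add: closed)
  next
    case False
    then have "2 \<le> D" using assms unfolding D_def by simp
    then obtain q where q: "D div 2 = Suc q" proof -
      have "D div 2 \<noteq> 0" using \<open>2 \<le> D\<close> by simp
      then show ?thesis using that by (cases "D div 2") auto
    qed
    have q2: "nat ((k - 2 - h) div 2) = q" using dd3[OF False] q \<open>2 \<le> D\<close> by simp
    have q2': "(D - 2) div 2 = q" using q \<open>2 \<le> D\<close> by simp
    have "Acoef k n h = int (Suc M choose Suc q)" using assms kn dd e q by (simp add: closed)
    moreover have "Acoef k (n - 1) h = int (M choose Suc q)" using assms kn dd q unfolding M_def by (simp add: closed)
    moreover have "Acoef (k - 2) (n - 1) h = int (M choose q)" using assms kn q2 False unfolding M_def by (simp add: closed)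
    ultimately show ?thesis by simp
  qed
qed

end
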